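(* Let $G$ be a countable group with a right-invariant metric $d$ whose integer balls $B_k=\{g:d(g,e)\le k\}$ are finite, having the Besicovitch covering property with constant $C$, and such that $(B_k)$ has the multiplicative doubling property with constant $D$. Let $G$ act non-singularly on a probability space $(X,\mu)$. Then for every $f\in L^1(\mu)$ and $\epsilon>0$, $$\mu\Big(\sup_{k\ge1}\Big|\frac{\sum_{g\in B_k}\hat gf}{\sum_{g\in B_k}\hat g1}\Big|>\epsilon\Big)\le\frac{CD}{\epsilon}\|f\|_1.$$
   Context: $\omega_g=\frac{d(\mu\circ g)}{d\mu}$, $\hat gf(x)=f(gx)\omega_g(x)$. Besicovitch covering property with constant $C$: for every finite $E$ and collection $\mathcal{U}=\{B_{r(x)}(x):x\in E\}$ of closed balls centred in $E$ there is $\mathcal{V}\subseteq\mathcal{U}$ with $\mathbf{1}_E\le\sum_{U\in\mathcal{V}}\mathbf{1}_U\le C$. Multiplicative doubling with constant $D$: there is $K$ with $|B_kB_k|\le D|B_k|$ for all $k\ge K$. *)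

theory Defs
  imports "HOL-Probability.Probability" "HOL-Algebra.Group_Action"
begin

definition int_ball :: "('g, 'b) monoid_scheme \<Rightarrow> ('g \<Rightarrow> 'g \<Rightarrow> real) \<Rightarrow> nat \<Rightarrow> 'g set" where
  "int_ball G d k = {g \<in> carrier G. d g \<one>\<^bsub>G\<^esub> \<le> real k}"

definition right_invariant_metric :: "('g, 'b) monoid_scheme \<Rightarrow> ('g \<Rightarrow> 'g \<Rightarrow> real) \<Rightarrow> bool" where
  "right_invariant_metric G d \<longleftrightarrow> Metric_space (carrier G) d \<and>
     (\<forall>x\<in>carrier G. \<forall>y\<in>carrier G. \<forall>g\<in>carrier G. d (x \<otimes>\<^bsub>G\<^esub> g) (y \<otimes>\<^bsub>G\<^esub> g) = d x y)"

definition cball_G :: "('g, 'b) monoid_scheme \<Rightarrow> ('g \<Rightarrow> 'g \<Rightarrow> real) \<Rightarrow> 'g \<Rightarrow> real \<Rightarrow> 'g set" where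
  "cball_G G d x r = {y \<in> carrier G. d y x \<le> r}"

definition besicovitch :: "('g, 'b) monoid_scheme \<Rightarrow> ('g \<Rightarrow> 'g \<Rightarrow> real) \<Rightarrow> real \<Rightarrow> bool" where
  "besicovitch G d C \<longleftrightarrow>
     (\<forall>E r. finite E \<longrightarrow> E \<subseteq> carrier G \<longrightarrow> (\<forall>x\<in>E. r x > 0) \<longrightarrow>
        (\<exists>V \<subseteq> (\<lambda>x. cball_G G d x (r x)) ` E.
           \<forall>y\<in>carrier G. indicator E y \<le> (\<Sum>U\<in>V. indicator U y :: real)
                          \<and> (\<Sum>U\<in>V. indicator U y :: real) \<le> C))"

definition mult_doubling :: "('g, 'b) monoid_scheme \<Rightarrow> ('g \<Rightarrow> 'g \<Rightarrow> real) \<Rightarrow> real \<Rightarrow> bool" where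
  "mult_doubling G d D \<longleftrightarrow>
     (\<exists>K. \<forall>k\<ge>K. real (card (int_ball G d k <#>\<^bsub>G\<^esub> int_ball G d k)) \<le> D * real (card (int_ball G d k)))"

definition nonsingular_action :: "('g, 'b) monoid_scheme \<Rightarrow> 'x measure \<Rightarrow> ('g \<Rightarrow> 'x \<Rightarrow> 'x) \<Rightarrow> bool" where
  "nonsingular_action G M T \<longleftrightarrow> group_action G (space M) T \<and>
     (\<forall>g\<in>carrier G. T g \<in> M \<rightarrow>\<^sub>M M \<and>
        (\<forall>A\<in>sets M. emeasure M (T g -` A \<inter> space M) = 0 \<longleftrightarrow> emeasure M A = 0))"

text \<open>omega_g = d(mu o g)/d mu, where (mu o g)(A) = mu(gA) = distr M M (T g^-1) A.\<close>
definition omega :: "('g, 'b) monoid_scheme \<Rightarrow> 'x measure \<Rightarrow> ('g \<Rightarrow> 'x \<Rightarrow> 'x) \<Rightarrow> 'g \<Rightarrow> 'x \<Rightarrow> real" where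
  "omega G M T g = (\<lambda>x. enn2real (RN_deriv M (distr M M (T (inv\<^bsub>G\<^esub> g))) x))"

definition hat_op :: "('g, 'b) monoid_scheme \<Rightarrow> 'x measure \<Rightarrow> ('g \<Rightarrow> 'x \<Rightarrow> 'x) \<Rightarrow> 'g \<Rightarrow> ('x \<Rightarrow> real) \<Rightarrow> 'x \<Rightarrow> real" where
  "hat_op G M T g f = (\<lambda>x. f (T g x) * omega G M T g x)"

end

theory Submission
  imports Defs
begin


locale ns_setting =
  fixes G :: "('g, 'b) monoid_scheme" and M :: "'x measure" and T :: "'g \<Rightarrow> 'x \<Rightarrow> 'x"
  assumes P: "prob_space M" and NS: "nonsingular_action G M T"
begin

interpretation prob_space M by (rule P)

lemma GA: "group_action G (space M) T" using NS unfolding nonsingular_action_def by blast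
lemma grp: "group G" using GA unfolding group_action_def group_hom_def by blast

lemma Tmeas: "g \<in> carrier G \<Longrightarrow> T g \<in> M \<rightarrow>\<^sub>M M" using NS unfolding nonsingular_action_def by blast

lemma Tcomp: "x \<in> space M \<Longrightarrow> g \<in> carrier G \<Longrightarrow> h \<in> carrier G \<Longrightarrow> T (g \<otimes>\<^bsub>G\<^esub> h) x = T g (T h x)"
  using group_action.composition_rule[OF GA] by blast

lemma Tone: "x \<in> space M \<Longrightarrow> T \<one>\<^bsub>G\<^esub> x = x"
  using group_action.id_eq_one[OF GA] by (metis restrict_apply')

lemma Tspace: "x \<in> space M \<Longrightarrow> g \<in> carrier G \<Longrightarrow> T g x \<in> space M"
  using group_action.element_image[OF GA] by blast

lemma Tinv: "x \<in> space M \<Longrightarrow> g \<in> carrier G \<Longrightarrow> T (inv\<^bsub>G\<^esub> g) (T g x) = x"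
  by (metis Tcomp Tone grp group.inv_closed group.l_inv)

lemma Tinv2: "x \<in> space M \<Longrightarrow> g \<in> carrier G \<Longrightarrow> T g (T (inv\<^bsub>G\<^esub> g) x) = x"
  by (metis Tcomp Tone grp group.inv_closed group.r_inv)

definition nu where "nu g = distr M M (T (inv\<^bsub>G\<^esub> g))"

lemma nu_sets[simp]: "sets (nu g) = sets M" by (simp add: nu_def)

lemma nu_ac: "g \<in> carrier G \<Longrightarrow> absolutely_continuous M (nu g)"
proof -
  assume g: "g \<in> carrier G"
  hence ig: "inv\<^bsub>G\<^esub> g \<in> carrier G" by (simp add: grp group.inv_closed)
  show ?thesis unfolding absolutely_continuous_def
  proof
    fix A assume A: "A \<in> null_sets M"
    hence "emeasure M (T (inv\<^bsub>G\<^esub> g) -` A \<inter> space M) = 0"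
      using NS ig unfolding nonsingular_action_def by auto
    thus "A \<in> null_sets (nu g)" using A Tmeas[OF ig]
      by (simp add: nu_def null_sets_def emeasure_distr)
  qed
qed

lemma nu_fin: "g \<in> carrier G \<Longrightarrow> sigma_finite_measure (nu g)"
proof -
  assume g: "g \<in> carrier G"
  hence ig: "inv\<^bsub>G\<^esub> g \<in> carrier G" by (simp add: grp group.inv_closed)
  show ?thesis unfolding nu_def using Tmeas[OF ig]
    by (intro prob_space_imp_sigma_finite prob_space_distr) auto
qed

lemma omega_meas[measurable]: "omega G M T g \<in> borel_measurable M"
  unfolding omega_def by measurable

lemma omega_ae: "g \<in> carrier G \<Longrightarrow> AE x in M. ennreal (omega G M T g x) = RN_deriv M (nu g) x"
proof -
  assume g: "g \<in> carrier G"
  have "AE x in M. RN_deriv M (nu g) x \<noteq> \<infinity>"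
    by (rule RN_deriv_finite[OF nu_fin[OF g] nu_ac[OF g] nu_sets])
  thus ?thesis by eventually_elim (auto simp: omega_def nu_def less_top)
qed

lemma dens: "g \<in> carrier G \<Longrightarrow> density M (\<lambda>x. ennreal (omega G M T g x)) = nu g"
proof -
  assume g: "g \<in> carrier G"
  have "density M (\<lambda>x. ennreal (omega G M T g x)) = density M (RN_deriv M (nu g))"
    by (rule density_cong) (auto simp: omega_ae[OF g])
  also have "\<dots> = nu g" by (rule density_RN_deriv[OF nu_ac[OF g] nu_sets])
  finally show ?thesis .
qed

lemma CV: assumes g: "g \<in> carrier G" and chi: "chi \<in> borel_measurable M"
  shows "(\<integral>\<^sup>+y. chi y * ennreal (omega G M T g y) \<partial>M) = (\<integral>\<^sup>+z. chi (T (inv\<^bsub>G\<^esub> g) z) \<partial>M)"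
proof -
  have ig: "inv\<^bsub>G\<^esub> g \<in> carrier G" using g by (simp add: grp group.inv_closed)
  have "(\<integral>\<^sup>+y. chi y * ennreal (omega G M T g y) \<partial>M) = (\<integral>\<^sup>+y. ennreal (omega G M T g y) * chi y \<partial>M)"
    by (simp add: mult.commute)
  also have "\<dots> = (\<integral>\<^sup>+y. chi y \<partial>density M (\<lambda>x. ennreal (omega G M T g x)))"
    using chi by (simp add: nn_integral_density)
  also have "\<dots> = (\<integral>\<^sup>+y. chi y \<partial>nu g)" by (simp add: dens[OF g])
  also have "\<dots> = (\<integral>\<^sup>+z. chi (T (inv\<^bsub>G\<^esub> g) z) \<partial>M)"
    unfolding nu_def using chi Tmeas[OF ig] by (simp add: nn_integral_distr)
  finally show ?thesis .
qed


lemma omega_nonneg: "omega G M T g x \<ge> 0" by (simp add: omega_def)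

lemma cocycle: assumes g: "g \<in> carrier G" and h: "h \<in> carrier G"
  shows "AE x in M. omega G M T (g \<otimes>\<^bsub>G\<^esub> h) x = omega G M T g (T h x) * omega G M T h x"
proof -
  have ig: "inv\<^bsub>G\<^esub> g \<in> carrier G" using g by (simp add: grp group.inv_closed)
  have ih: "inv\<^bsub>G\<^esub> h \<in> carrier G" using h by (simp add: grp group.inv_closed)
  have gh: "g \<otimes>\<^bsub>G\<^esub> h \<in> carrier G" using g h by (meson grp group.is_monoid monoid.m_closed)
  have igh: "inv\<^bsub>G\<^esub> (g \<otimes>\<^bsub>G\<^esub> h) = inv\<^bsub>G\<^esub> h \<otimes>\<^bsub>G\<^esub> inv\<^bsub>G\<^esub> g"
    using g h by (simp add: grp group.inv_mult_group)
  note Th[measurable] = Tmeas[OF h] and Tih[measurable] = Tmeas[OF ih] and Tig[measurable] = Tmeas[OF ig]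
  note Tgh[measurable] = Tmeas[OF group.inv_closed[OF grp gh]]
  define phi where "phi x = ennreal (omega G M T g (T h x)) * ennreal (omega G M T h x)" for x
  have phim: "phi \<in> borel_measurable M" unfolding phi_def by measurable
  have "density M phi = nu (g \<otimes>\<^bsub>G\<^esub> h)"
  proof (rule measure_eqI)
    show "sets (density M phi) = sets (nu (g \<otimes>\<^bsub>G\<^esub> h))" by simp
    fix A assume "A \<in> sets (density M phi)"
    hence A[measurable]: "A \<in> sets M" by simp
    have "emeasure (density M phi) A = (\<integral>\<^sup>+x. phi x * indicator A x \<partial>M)"
      using phim by (simp add: emeasure_density)
    also have "\<dots> = (\<integral>\<^sup>+x. (indicator A x * ennreal (omega G M T g (T h x))) * ennreal (omega G M T h x) \<partial>M)"
      unfolding phi_def by (simp add: ac_simps)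
    also have "\<dots> = (\<integral>\<^sup>+z. indicator A (T (inv\<^bsub>G\<^esub> h) z) * ennreal (omega G M T g (T h (T (inv\<^bsub>G\<^esub> h) z))) \<partial>M)"
      by (rule CV[OF h]) measurable
    also have "\<dots> = (\<integral>\<^sup>+z. indicator A (T (inv\<^bsub>G\<^esub> h) z) * ennreal (omega G M T g z) \<partial>M)"
      by (rule nn_integral_cong) (simp add: Tinv2 h)
    also have "\<dots> = (\<integral>\<^sup>+w. indicator A (T (inv\<^bsub>G\<^esub> h) (T (inv\<^bsub>G\<^esub> g) w)) \<partial>M)"
      by (rule CV[OF g]) measurable
    also have "\<dots> = (\<integral>\<^sup>+w. indicator A (T (inv\<^bsub>G\<^esub> (g \<otimes>\<^bsub>G\<^esub> h)) w) \<partial>M)"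
      by (rule nn_integral_cong) (simp add: igh Tcomp ih ig)
    also have "\<dots> = (\<integral>\<^sup>+w. indicator (T (inv\<^bsub>G\<^esub> (g \<otimes>\<^bsub>G\<^esub> h)) -` A \<inter> space M) w \<partial>M)"
      by (rule nn_integral_cong) (simp add: indicator_def)
    also have "\<dots> = emeasure M (T (inv\<^bsub>G\<^esub> (g \<otimes>\<^bsub>G\<^esub> h)) -` A \<inter> space M)"
      by (rule nn_integral_indicator) measurable
    also have "\<dots> = emeasure (nu (g \<otimes>\<^bsub>G\<^esub> h)) A"
      unfolding nu_def using Tgh by (simp add: emeasure_distr)
    finally show "emeasure (density M phi) A = emeasure (nu (g \<otimes>\<^bsub>G\<^esub> h)) A" .
  qed
  hence "AE x in M. phi x = RN_deriv M (nu (g \<otimes>\<^bsub>G\<^esub> h)) x"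
    by (rule RN_deriv_unique[OF phim])
  with omega_ae[OF gh] show ?thesis
  proof eventually_elim
    case (elim x)
    hence "ennreal (omega G M T (g \<otimes>\<^bsub>G\<^esub> h) x) = ennreal (omega G M T g (T h x) * omega G M T h x)"
      unfolding phi_def by (simp add: ennreal_mult omega_nonneg)
    thus ?case by (simp add: omega_nonneg)
  qed
qed

lemma transfer_ind: assumes h: "h \<in> carrier G" and A[measurable]: "A \<in> sets M"
  shows "(\<integral>\<^sup>+x. indicator A (T h x) * ennreal (omega G M T h x) \<partial>M) = emeasure M A"
proof -
  have ih: "inv\<^bsub>G\<^esub> h \<in> carrier G" using h by (simp add: grp group.inv_closed)
  note Th[measurable] = Tmeas[OF h]
  have "(\<integral>\<^sup>+x. indicator A (T h x) * ennreal (omega G M T h x) \<partial>M) = (\<integral>\<^sup>+z. indicator A (T h (T (inv\<^bsub>G\<^esub> h) z)) \<partial>M)"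
    by (rule CV[OF h]) measurable
  also have "\<dots> = (\<integral>\<^sup>+z. indicator A z \<partial>M)"
    by (rule nn_integral_cong) (simp add: Tinv2 h)
  finally show ?thesis by simp
qed

lemma transfer_f: assumes h: "h \<in> carrier G" and f[measurable]: "f \<in> borel_measurable M"
  shows "(\<integral>\<^sup>+x. ennreal \<bar>f (T h x)\<bar> * ennreal (omega G M T h x) \<partial>M) = (\<integral>\<^sup>+z. ennreal \<bar>f z\<bar> \<partial>M)"
proof -
  note Th[measurable] = Tmeas[OF h]
  have "(\<integral>\<^sup>+x. ennreal \<bar>f (T h x)\<bar> * ennreal (omega G M T h x) \<partial>M) = (\<integral>\<^sup>+z. ennreal \<bar>f (T h (T (inv\<^bsub>G\<^esub> h) z))\<bar> \<partial>M)"
    by (rule CV[OF h]) measurable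
  also have "\<dots> = (\<integral>\<^sup>+z. ennreal \<bar>f z\<bar> \<partial>M)"
    by (rule nn_integral_cong) (simp add: Tinv2 h)
  finally show ?thesis .
qed

end


locale gm =
  fixes G :: "('g, 'b) monoid_scheme" (structure) and d :: "'g \<Rightarrow> 'g \<Rightarrow> real"
  assumes grp: "group G" and rim: "right_invariant_metric G d"
begin

lemma MS: "Metric_space (carrier G) d" using rim unfolding right_invariant_metric_def by blast

lemma dshift: assumes y: "y \<in> carrier G" and h: "h \<in> carrier G"
  shows "d (y \<otimes>\<^bsub>G\<^esub> inv\<^bsub>G\<^esub> h) \<one>\<^bsub>G\<^esub> = d y h"
proof -
  interpret group G by (rule grp)
  have "d (y \<otimes> inv h \<otimes> h) (\<one> \<otimes> h) = d (y \<otimes> inv h) \<one>"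
    using rim y h unfolding right_invariant_metric_def by (meson inv_closed m_closed one_closed)
  moreover have "y \<otimes> inv h \<otimes> h = y" using y h by (simp add: m_assoc)
  ultimately show ?thesis using h by simp
qed

lemma one_ball: "\<one>\<^bsub>G\<^esub> \<in> int_ball G d k"
proof -
  interpret group G by (rule grp)
  show ?thesis unfolding int_ball_def using Metric_space.zero[OF MS, of \<one> \<one>] by simp
qed

lemma ball_sub: "int_ball G d k \<subseteq> carrier G" unfolding int_ball_def by auto

lemma reindex: assumes h: "h \<in> carrier G"
  shows "(\<Sum>g\<in>int_ball G d k. a (g \<otimes>\<^bsub>G\<^esub> h)) = (\<Sum>y\<in>cball_G G d h (real k). a y)"
proof -
  interpret group G by (rule grp)
  have "bij_betw (\<lambda>g. g \<otimes> h) (int_ball G d k) (cball_G G d h (real k))"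
  proof (rule bij_betw_imageI)
    show "inj_on (\<lambda>g. g \<otimes> h) (int_ball G d k)"
      using h by (auto simp: inj_on_def int_ball_def)
    show "(\<lambda>g. g \<otimes> h) ` int_ball G d k = cball_G G d h (real k)"
    proof
      show "(\<lambda>g. g \<otimes> h) ` int_ball G d k \<subseteq> cball_G G d h (real k)"
      proof clarify
        fix g assume g: "g \<in> int_ball G d k"
        hence gc: "g \<in> carrier G" by (simp add: int_ball_def)
        have "d (g \<otimes> h \<otimes> inv h) \<one> = d (g \<otimes> h) h" using dshift gc h by simp
        moreover have "g \<otimes> h \<otimes> inv h = g" using gc h by (simp add: m_assoc)
        ultimately show "g \<otimes> h \<in> cball_G G d h (real k)" using g gc h
          by (simp add: int_ball_def cball_G_def)
      qed
      show "cball_G G d h (real k) \<subseteq> (\<lambda>g. g \<otimes> h) ` int_ball G d k"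
      proof
        fix y assume y: "y \<in> cball_G G d h (real k)"
        hence yc: "y \<in> carrier G" by (simp add: cball_G_def)
        have "y \<otimes> inv h \<in> int_ball G d k" using y yc h dshift[OF yc h]
          by (simp add: int_ball_def cball_G_def)
        moreover have "y = y \<otimes> inv h \<otimes> h" using yc h by (simp add: m_assoc)
        ultimately show "y \<in> (\<lambda>g. g \<otimes> h) ` int_ball G d k" by blast
      qed
    qed
  qed
  thus ?thesis by (rule sum.reindex_bij_betw)
qed

lemma cball_sub: assumes h: "h \<in> int_ball G d N" and k: "k \<le> N"
  shows "cball_G G d h (real k) \<subseteq> int_ball G d N <#>\<^bsub>G\<^esub> int_ball G d N"
proof
  interpret group G by (rule grp)
  fix y assume y: "y \<in> cball_G G d h (real k)"
  have hc: "h \<in> carrier G" using h by (simp add: int_ball_def)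
  hence yc: "y \<in> carrier G" using y by (simp add: cball_G_def)
  have "y \<otimes> inv h \<in> int_ball G d N" using y yc hc dshift[OF yc hc] k
    by (simp add: int_ball_def cball_G_def)
  moreover have "y = y \<otimes> inv h \<otimes> h" using yc hc by (simp add: m_assoc)
  ultimately show "y \<in> int_ball G d N <#>\<^bsub>G\<^esub> int_ball G d N" using h
    unfolding set_mult_def by blast
qed

lemma swap_ind: assumes "finite S" "finite V" "\<And>U. U \<in> V \<Longrightarrow> U \<subseteq> S"
  shows "(\<Sum>y\<in>S. a y * (\<Sum>U\<in>V. indicator U y :: real)) = (\<Sum>U\<in>V. \<Sum>y\<in>U. a y)"
proof -
  have "(\<Sum>y\<in>S. a y * (\<Sum>U\<in>V. indicator U y :: real)) = (\<Sum>U\<in>V. \<Sum>y\<in>S. a y * indicator U y)"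
    by (simp add: sum_distrib_left sum.swap[of _ S])
  also have "\<dots> = (\<Sum>U\<in>V. \<Sum>y\<in>U. a y)"
  proof (rule sum.cong[OF refl])
    fix U assume "U \<in> V"
    hence "S \<inter> U = U" using assms by blast
    hence "(\<Sum>y\<in>U. a y) = (\<Sum>y\<in>S. if y \<in> U then a y else 0)"
      using sum.inter_restrict[OF assms(1), of a U] by simp
    also have "\<dots> = (\<Sum>y\<in>S. a y * indicator U y)" by (intro sum.cong) (auto simp: indicator_def)
    finally show "(\<Sum>y\<in>S. a y * indicator U y) = (\<Sum>y\<in>U. a y)" by simp
  qed
  finally show ?thesis .
qed

lemma combi:
  fixes F W :: "'g \<Rightarrow> real" and E :: "'g set"
  assumes fin: "\<And>k. finite (int_ball G d k)" and bes: "besicovitch G d C"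
    and eps: "\<epsilon> > 0" and Wn: "\<And>y. y \<in> carrier G \<Longrightarrow> W y \<ge> 0"
    and E: "E \<subseteq> int_ball G d N" and LN: "L \<le> N"
    and bad: "\<And>h. h \<in> E \<Longrightarrow> \<exists>k\<in>{1..L}. \<epsilon> * (\<Sum>y\<in>cball_G G d h (real k). W y) \<le> (\<Sum>y\<in>cball_G G d h (real k). \<bar>F y\<bar>)"
  shows "\<epsilon> * (\<Sum>h\<in>E. W h) \<le> C * (\<Sum>y\<in>int_ball G d N <#>\<^bsub>G\<^esub> int_ball G d N. \<bar>F y\<bar>)"
proof -
  interpret group G by (rule grp)
  define S where "S = int_ball G d N <#>\<^bsub>G\<^esub> int_ball G d N"
  obtain kk where kk: "\<And>h. h \<in> E \<Longrightarrow> kk h \<in> {1..L} \<and> \<epsilon> * (\<Sum>y\<in>cball_G G d h (real (kk h)). W y) \<le> (\<Sum>y\<in>cball_G G d h (real (kk h)). \<bar>F y\<bar>)"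
    using bad by metis
  have finE: "finite E" using E fin finite_subset by blast
  have Ec: "E \<subseteq> carrier G" using E ball_sub by blast
  have finS: "finite S" unfolding S_def set_mult_def using fin by simp
  have Sc: "S \<subseteq> carrier G" unfolding S_def set_mult_def using ball_sub by blast
  have ES: "E \<subseteq> S"
  proof
    fix h assume "h \<in> E"
    hence "h \<in> int_ball G d N" "h \<in> carrier G" using E Ec by auto
    moreover have "h = h \<otimes> \<one>" using \<open>h \<in> carrier G\<close> by simp
    ultimately show "h \<in> S" unfolding S_def set_mult_def using one_ball by blast
  qed
  from bes[unfolded besicovitch_def, rule_format, OF finE Ec, of "\<lambda>h. real (kk h)"]
  obtain V where V: "V \<subseteq> (\<lambda>x. cball_G G d x (real (kk x))) ` E"
    and cov: "\<And>y. y \<in> carrier G \<Longrightarrow> indicator E y \<le> (\<Sum>U\<in>V. indicator U y :: real) \<and> (\<Sum>U\<in>V. indicator U y :: real) \<le> C"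
    using kk by fastforce
  have finV: "finite V" using V finE finite_surj by blast
  have VS: "\<And>U. U \<in> V \<Longrightarrow> U \<subseteq> S"
  proof -
    fix U assume "U \<in> V"
    then obtain h where h: "h \<in> E" and U: "U = cball_G G d h (real (kk h))" using V by blast
    show "U \<subseteq> S" unfolding U S_def using cball_sub[of h N "kk h"] h E kk[OF h] LN by auto
  qed
  have "(\<Sum>h\<in>E. W h) = (\<Sum>y\<in>S. W y * indicator E y)"
  proof -
    have "S \<inter> E = E" using ES by blast
    hence "(\<Sum>h\<in>E. W h) = (\<Sum>y\<in>S. if y \<in> E then W y else 0)"
      using sum.inter_restrict[OF finS, of W E] by simp
    also have "\<dots> = (\<Sum>y\<in>S. W y * indicator E y)" by (intro sum.cong) (auto simp: indicator_def)
    finally show ?thesis .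
  qed
  also have "\<dots> \<le> (\<Sum>y\<in>S. W y * (\<Sum>U\<in>V. indicator U y))"
    using cov Wn Sc by (intro sum_mono mult_left_mono) auto
  also have "\<dots> = (\<Sum>U\<in>V. \<Sum>y\<in>U. W y)" by (rule swap_ind[OF finS finV VS])
  finally have 1: "\<epsilon> * (\<Sum>h\<in>E. W h) \<le> \<epsilon> * (\<Sum>U\<in>V. \<Sum>y\<in>U. W y)"
    using eps by simp
  also have "\<dots> = (\<Sum>U\<in>V. \<epsilon> * (\<Sum>y\<in>U. W y))" by (simp add: sum_distrib_left)
  also have "\<dots> \<le> (\<Sum>U\<in>V. \<Sum>y\<in>U. \<bar>F y\<bar>)"
  proof (rule sum_mono)
    fix U assume "U \<in> V"
    then obtain h where h: "h \<in> E" and U: "U = cball_G G d h (real (kk h))" using V by blast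
    show "\<epsilon> * (\<Sum>y\<in>U. W y) \<le> (\<Sum>y\<in>U. \<bar>F y\<bar>)" using kk[OF h] U by simp
  qed
  also have "\<dots> = (\<Sum>y\<in>S. \<bar>F y\<bar> * (\<Sum>U\<in>V. indicator U y))" by (rule swap_ind[OF finS finV VS, symmetric])
  also have "\<dots> \<le> (\<Sum>y\<in>S. \<bar>F y\<bar> * C)"
    using cov Sc by (intro sum_mono mult_left_mono) auto
  also have "\<dots> = C * (\<Sum>y\<in>S. \<bar>F y\<bar>)" by (simp add: sum_distrib_left mult.commute)
  finally show ?thesis unfolding S_def .
qed

end


theorem theorem7:
  fixes G :: "('g, 'b) monoid_scheme" and d :: "'g \<Rightarrow> 'g \<Rightarrow> real"
    and M :: "'x measure" and T :: "'g \<Rightarrow> 'x \<Rightarrow> 'x"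
    and C D \<epsilon> :: real and f :: "'x \<Rightarrow> real"
  assumes "group G" and "countable (carrier G)"
    and "right_invariant_metric G d"
    and "\<And>k. finite (int_ball G d k)"
    and "besicovitch G d C"
    and "mult_doubling G d D"
    and "prob_space M"
    and "nonsingular_action G M T"
    and "integrable M f" and "\<epsilon> > 0"
  shows "measure M {x \<in> space M.
            (SUP k\<in>{1..}. ereal \<bar>(\<Sum>g\<in>int_ball G d k. hat_op G M T g f x)
                              / (\<Sum>g\<in>int_ball G d k. hat_op G M T g (\<lambda>_. 1) x)\<bar>) > ereal \<epsilon>}
         \<le> C * D / \<epsilon> * (\<integral>x. \<bar>f x\<bar> \<partial>M)"
proof -
  interpret ns: ns_setting G M T using assms(7,8) by (simp add: ns_setting_def)
  interpret gm G d using assms(1,3) by (simp add: gm_def)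
  interpret prob_space M by fact
  interpret group G by fact
  have eps: "\<epsilon> > 0" by fact
  have f[measurable]: "f \<in> borel_measurable M" using assms(9) by auto
  define nf where "nf = (\<integral>x. \<bar>f x\<bar> \<partial>M)"
  have nf0: "nf \<ge> 0" unfolding nf_def by simp
  have hat1: "\<And>g x. hat_op G M T g (\<lambda>_. 1) x = omega G M T g x" by (simp add: hat_op_def)
  define R where "R k x = \<bar>(\<Sum>g\<in>int_ball G d k. hat_op G M T g f x) / (\<Sum>g\<in>int_ball G d k. hat_op G M T g (\<lambda>_. 1) x)\<bar>" for k x
  have Rm[measurable]: "R k \<in> borel_measurable M" for k
  proof -
    have hm: "(\<lambda>x. hat_op G M T g h x) \<in> borel_measurable M" if "g \<in> int_ball G d k" "h \<in> borel_measurable M" for g h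
    proof -
      have [measurable]: "T g \<in> M \<rightarrow>\<^sub>M M" using ns.Tmeas that ball_sub by blast
      note [measurable] = that(2)
      show ?thesis unfolding hat_op_def by measurable
    qed
    have [measurable]: "(\<lambda>x. \<Sum>g\<in>int_ball G d k. hat_op G M T g f x) \<in> borel_measurable M"
      by (rule borel_measurable_sum) (simp add: hm)
    have [measurable]: "(\<lambda>x. \<Sum>g\<in>int_ball G d k. hat_op G M T g (\<lambda>_. 1) x) \<in> borel_measurable M"
      by (rule borel_measurable_sum) (simp add: hm)
    show ?thesis unfolding R_def by measurable
  qed
  define A where "A L = {x \<in> space M. \<exists>k\<in>{1..L}. \<epsilon> < R k x}" for L
  have Am[measurable]: "A L \<in> sets M" for L unfolding A_def by measurable
  have C1: "C \<ge> 1"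
  proof -
    have "\<exists>V \<subseteq> (\<lambda>x. cball_G G d x ((\<lambda>_. 1::real) x)) ` {\<one>\<^bsub>G\<^esub>}.
           \<forall>y\<in>carrier G. indicator {\<one>\<^bsub>G\<^esub>} y \<le> (\<Sum>U\<in>V. indicator U y :: real)
                          \<and> (\<Sum>U\<in>V. indicator U y :: real) \<le> C"
      using assms(5) unfolding besicovitch_def
      by (drule_tac x="{\<one>\<^bsub>G\<^esub>}" in spec, drule_tac x="\<lambda>_. 1" in spec) simp
    then obtain V where "\<forall>y\<in>carrier G. indicator {\<one>\<^bsub>G\<^esub>} y \<le> (\<Sum>U\<in>V. indicator U y :: real)
                          \<and> (\<Sum>U\<in>V. indicator U y :: real) \<le> C" by blast
    hence "indicator {\<one>\<^bsub>G\<^esub>} \<one>\<^bsub>G\<^esub> \<le> C" using one_closed by fastforce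
    thus ?thesis by simp
  qed
  have bound: "\<epsilon> * measure M (A L) \<le> C * D * nf" for L
  proof -
    obtain K where K: "\<And>k. k \<ge> K \<Longrightarrow> real (card (int_ball G d k <#>\<^bsub>G\<^esub> int_ball G d k)) \<le> D * real (card (int_ball G d k))"
      using assms(6) unfolding mult_doubling_def by blast
    define N where "N = max K L"
    define B where "B = int_ball G d N"
    define S where "S = B <#>\<^bsub>G\<^esub> B"
    have NL: "L \<le> N" unfolding N_def by simp
    have SD: "real (card S) \<le> D * real (card B)" unfolding S_def B_def N_def by (rule K) simp
    have finB: "finite B" unfolding B_def by (rule assms(4))
    have finS: "finite S" unfolding S_def set_mult_def using finB by simp
    have Bc: "B \<subseteq> carrier G" unfolding B_def by (rule ball_sub)
    have Sc: "S \<subseteq> carrier G" unfolding S_def set_mult_def using Bc by blast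
    have cardpos: "card B > 0" using finB one_ball[of N] unfolding B_def by (auto simp: card_gt_0_iff)
    have D0: "D \<ge> 0" using SD cardpos by (smt (verit) of_nat_0_le_iff of_nat_0_less_iff zero_le_mult_iff)
    have AE_co: "AE x in M. \<forall>g\<in>carrier G. \<forall>h\<in>carrier G. omega G M T (g \<otimes>\<^bsub>G\<^esub> h) x = omega G M T g (T h x) * omega G M T h x"
      using ns.cocycle by (simp add: AE_ball_countable assms(2))
    have pw: "AE x in M. \<epsilon> * (\<Sum>h\<in>B. indicator (A L) (T h x) * omega G M T h x) \<le> C * (\<Sum>y\<in>S. \<bar>f (T y x)\<bar> * omega G M T y x)"
      using AE_co AE_space
    proof eventually_elim
      case (elim x)
      hence x: "x \<in> space M" and co: "\<And>g h. g \<in> carrier G \<Longrightarrow> h \<in> carrier G \<Longrightarrow> omega G M T (g \<otimes>\<^bsub>G\<^esub> h) x = omega G M T g (T h x) * omega G M T h x"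
        by auto
      define E where "E = {h \<in> B. T h x \<in> A L}"
      have 0: "(\<Sum>h\<in>B. indicator (A L) (T h x) * omega G M T h x) = (\<Sum>h\<in>E. omega G M T h x)"
        unfolding E_def by (simp add: sum.inter_filter[OF finB]) (intro sum.cong, auto simp: indicator_def)
      have "\<epsilon> * (\<Sum>h\<in>E. omega G M T h x) \<le> C * (\<Sum>y\<in>S. \<bar>f (T y x) * omega G M T y x\<bar>)"
        unfolding S_def B_def
      proof (rule combi[where F = "\<lambda>y. f (T y x) * omega G M T y x" and W = "\<lambda>y. omega G M T y x", OF assms(4) assms(5) eps])
        show "\<And>y. 0 \<le> omega G M T y x" by (rule ns.omega_nonneg)
        show "E \<subseteq> int_ball G d N" by (auto simp: E_def B_def)
        show "L \<le> N" by (rule NL)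
        fix h assume h: "h \<in> E"
        hence hc: "h \<in> carrier G" and z: "T h x \<in> A L" using Bc by (auto simp: E_def)
        then obtain k where k: "k \<in> {1..L}" and Rk: "\<epsilon> < R k (T h x)" by (auto simp: A_def)
        define nu where "nu = (\<Sum>g\<in>int_ball G d k. hat_op G M T g f (T h x))"
        define de where "de = (\<Sum>g\<in>int_ball G d k. omega G M T g (T h x))"
        have de0: "de \<ge> 0" by (simp add: de_def sum_nonneg ns.omega_nonneg)
        have Rk': "\<epsilon> < \<bar>nu / de\<bar>" using Rk by (simp add: R_def nu_def de_def hat1)
        hence "de \<noteq> 0" using eps by auto
        hence dep: "de > 0" using de0 by simp
        have "\<epsilon> < \<bar>nu\<bar> / de" using Rk' dep by (simp add: abs_div)
        hence "\<epsilon> * de < \<bar>nu\<bar>" using dep by (simp add: pos_less_divide_eq)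
        hence 1: "\<epsilon> * de * omega G M T h x \<le> \<bar>nu\<bar> * omega G M T h x"
          by (intro mult_right_mono) (auto simp: ns.omega_nonneg)
        have nuw: "nu * omega G M T h x = (\<Sum>y\<in>cball_G G d h (real k). f (T y x) * omega G M T y x)"
        proof -
          have "nu * omega G M T h x = (\<Sum>g\<in>int_ball G d k. f (T (g \<otimes>\<^bsub>G\<^esub> h) x) * omega G M T (g \<otimes>\<^bsub>G\<^esub> h) x)"
            unfolding nu_def sum_distrib_right hat_op_def
          proof (rule sum.cong[OF refl])
            fix g assume "g \<in> int_ball G d k"
            hence g: "g \<in> carrier G" using ball_sub by blast
            show "f (T g (T h x)) * omega G M T g (T h x) * omega G M T h x = f (T (g \<otimes>\<^bsub>G\<^esub> h) x) * omega G M T (g \<otimes>\<^bsub>G\<^esub> h) x"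
              using co[OF g hc] ns.Tcomp[OF x g hc] by simp
          qed
          also have "\<dots> = (\<Sum>y\<in>cball_G G d h (real k). f (T y x) * omega G M T y x)"
            by (rule reindex[OF hc])
          finally show ?thesis .
        qed
        have dew: "de * omega G M T h x = (\<Sum>y\<in>cball_G G d h (real k). omega G M T y x)"
        proof -
          have "de * omega G M T h x = (\<Sum>g\<in>int_ball G d k. omega G M T (g \<otimes>\<^bsub>G\<^esub> h) x)"
            unfolding de_def sum_distrib_right
          proof (rule sum.cong[OF refl])
            fix g assume "g \<in> int_ball G d k"
            hence g: "g \<in> carrier G" using ball_sub by blast
            show "omega G M T g (T h x) * omega G M T h x = omega G M T (g \<otimes>\<^bsub>G\<^esub> h) x"
              using co[OF g hc] by simp
          qed
          also have "\<dots> = (\<Sum>y\<in>cball_G G d h (real k). omega G M T y x)"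
            by (rule reindex[OF hc])
          finally show ?thesis .
        qed
        have "\<epsilon> * (\<Sum>y\<in>cball_G G d h (real k). omega G M T y x) = \<epsilon> * de * omega G M T h x"
          using dew by simp
        also have "\<dots> \<le> \<bar>nu\<bar> * omega G M T h x" by (rule 1)
        also have "\<dots> = \<bar>nu * omega G M T h x\<bar>" by (simp add: abs_mult ns.omega_nonneg)
        also have "\<dots> \<le> (\<Sum>y\<in>cball_G G d h (real k). \<bar>f (T y x) * omega G M T y x\<bar>)"
          unfolding nuw by (rule sum_abs)
        finally show "\<exists>k\<in>{1..L}. \<epsilon> * (\<Sum>y\<in>cball_G G d h (real k). omega G M T y x)
            \<le> (\<Sum>y\<in>cball_G G d h (real k). \<bar>f (T y x) * omega G M T y x\<bar>)" using k by blast
      qed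
      thus ?case unfolding 0 by (simp add: abs_mult ns.omega_nonneg)
    qed
    have pw2: "AE x in M. ennreal \<epsilon> * (\<Sum>h\<in>B. indicator (A L) (T h x) * ennreal (omega G M T h x))
        \<le> ennreal C * (\<Sum>y\<in>S. ennreal \<bar>f (T y x)\<bar> * ennreal (omega G M T y x))"
      using pw
    proof eventually_elim
      case (elim x)
      have l: "ennreal \<epsilon> * (\<Sum>h\<in>B. indicator (A L) (T h x) * ennreal (omega G M T h x))
          = ennreal (\<epsilon> * (\<Sum>h\<in>B. indicator (A L) (T h x) * omega G M T h x))"
      proof -
        have "(\<Sum>h\<in>B. indicator (A L) (T h x) * ennreal (omega G M T h x)) = (\<Sum>h\<in>B. ennreal (indicator (A L) (T h x) * omega G M T h x))"
          by (intro sum.cong) (auto simp: ennreal_mult ns.omega_nonneg ennreal_indicator)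
        also have "\<dots> = ennreal (\<Sum>h\<in>B. indicator (A L) (T h x) * omega G M T h x)"
          by (rule sum_ennreal) (simp add: ns.omega_nonneg)
        finally show ?thesis using eps by (simp add: ennreal_mult ns.omega_nonneg sum_nonneg)
      qed
      have r: "ennreal C * (\<Sum>y\<in>S. ennreal \<bar>f (T y x)\<bar> * ennreal (omega G M T y x))
          = ennreal (C * (\<Sum>y\<in>S. \<bar>f (T y x)\<bar> * omega G M T y x))"
      proof -
        have "(\<Sum>y\<in>S. ennreal \<bar>f (T y x)\<bar> * ennreal (omega G M T y x)) = (\<Sum>y\<in>S. ennreal (\<bar>f (T y x)\<bar> * omega G M T y x))"
          by (intro sum.cong) (auto simp: ennreal_mult ns.omega_nonneg)
        also have "\<dots> = ennreal (\<Sum>y\<in>S. \<bar>f (T y x)\<bar> * omega G M T y x)"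
          by (rule sum_ennreal) (simp add: ns.omega_nonneg)
        finally show ?thesis using C1 by (simp add: ennreal_mult ns.omega_nonneg sum_nonneg)
      qed
      show ?case unfolding l r using elim C1 by (intro ennreal_leI) 
    qed
    have "ennreal \<epsilon> * (of_nat (card B) * emeasure M (A L))
        = (\<integral>\<^sup>+x. ennreal \<epsilon> * (\<Sum>h\<in>B. indicator (A L) (T h x) * ennreal (omega G M T h x)) \<partial>M)"
    proof -
      have "(\<integral>\<^sup>+x. ennreal \<epsilon> * (\<Sum>h\<in>B. indicator (A L) (T h x) * ennreal (omega G M T h x)) \<partial>M)
          = ennreal \<epsilon> * (\<integral>\<^sup>+x. (\<Sum>h\<in>B. indicator (A L) (T h x) * ennreal (omega G M T h x)) \<partial>M)"
      proof (rule nn_integral_cmult, rule borel_measurable_sum)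
        fix h assume "h \<in> B"
        hence [measurable]: "T h \<in> M \<rightarrow>\<^sub>M M" using Bc ns.Tmeas by blast
        show "(\<lambda>x. indicator (A L) (T h x) * ennreal (omega G M T h x)) \<in> borel_measurable M" by measurable
      qed
      also have "(\<integral>\<^sup>+x. (\<Sum>h\<in>B. indicator (A L) (T h x) * ennreal (omega G M T h x)) \<partial>M)
          = (\<Sum>h\<in>B. \<integral>\<^sup>+x. indicator (A L) (T h x) * ennreal (omega G M T h x) \<partial>M)"
      proof (rule nn_integral_sum)
        fix h assume "h \<in> B"
        hence [measurable]: "T h \<in> M \<rightarrow>\<^sub>M M" using Bc ns.Tmeas by blast
        show "(\<lambda>x. indicator (A L) (T h x) * ennreal (omega G M T h x)) \<in> borel_measurable M" by measurable
      qed
      also have "\<dots> = (\<Sum>h\<in>B. emeasure M (A L))"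
        by (rule sum.cong[OF refl]) (use Bc in \<open>auto intro: ns.transfer_ind\<close>)
      finally show ?thesis by simp
    qed
    also have "\<dots> \<le> (\<integral>\<^sup>+x. ennreal C * (\<Sum>y\<in>S. ennreal \<bar>f (T y x)\<bar> * ennreal (omega G M T y x)) \<partial>M)"
      by (rule nn_integral_mono_AE[OF pw2])
    also have "\<dots> = ennreal C * (of_nat (card S) * ennreal nf)"
    proof -
      have "(\<integral>\<^sup>+x. ennreal C * (\<Sum>y\<in>S. ennreal \<bar>f (T y x)\<bar> * ennreal (omega G M T y x)) \<partial>M)
          = ennreal C * (\<integral>\<^sup>+x. (\<Sum>y\<in>S. ennreal \<bar>f (T y x)\<bar> * ennreal (omega G M T y x)) \<partial>M)"
      proof (rule nn_integral_cmult, rule borel_measurable_sum)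
        fix h assume "h \<in> S"
        hence [measurable]: "T h \<in> M \<rightarrow>\<^sub>M M" using Sc ns.Tmeas by blast
        show "(\<lambda>x. ennreal \<bar>f (T h x)\<bar> * ennreal (omega G M T h x)) \<in> borel_measurable M" by measurable
      qed
      also have "(\<integral>\<^sup>+x. (\<Sum>y\<in>S. ennreal \<bar>f (T y x)\<bar> * ennreal (omega G M T y x)) \<partial>M)
          = (\<Sum>y\<in>S. \<integral>\<^sup>+x. ennreal \<bar>f (T y x)\<bar> * ennreal (omega G M T y x) \<partial>M)"
      proof (rule nn_integral_sum)
        fix h assume "h \<in> S"
        hence [measurable]: "T h \<in> M \<rightarrow>\<^sub>M M" using Sc ns.Tmeas by blast
        show "(\<lambda>x. ennreal \<bar>f (T h x)\<bar> * ennreal (omega G M T h x)) \<in> borel_measurable M" by measurable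
      qed
      also have "\<dots> = (\<Sum>y\<in>S. ennreal nf)"
      proof (rule sum.cong[OF refl])
        fix y assume "y \<in> S"
        hence "y \<in> carrier G" using Sc by blast
        hence "(\<integral>\<^sup>+x. ennreal \<bar>f (T y x)\<bar> * ennreal (omega G M T y x) \<partial>M) = (\<integral>\<^sup>+z. ennreal \<bar>f z\<bar> \<partial>M)"
          by (rule ns.transfer_f[OF _ f])
        also have "\<dots> = ennreal nf" unfolding nf_def
          by (rule nn_integral_eq_integral) (use assms(9) in auto)
        finally show "(\<integral>\<^sup>+x. ennreal \<bar>f (T y x)\<bar> * ennreal (omega G M T y x) \<partial>M) = ennreal nf" .
      qed
      finally show ?thesis by simp
    qed
    finally have ineq: "ennreal \<epsilon> * (of_nat (card B) * emeasure M (A L)) \<le> ennreal C * (of_nat (card S) * ennreal nf)" .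
    have "ennreal (\<epsilon> * (real (card B) * measure M (A L))) \<le> ennreal (C * (real (card S) * nf))"
      using ineq eps C1 nf0 by (simp add: emeasure_eq_measure ennreal_mult ennreal_of_nat_eq_real_of_nat)
    hence "\<epsilon> * (real (card B) * measure M (A L)) \<le> C * (real (card S) * nf)"
      using C1 nf0 by (subst (asm) ennreal_le_iff) auto
    also have "\<dots> \<le> C * (D * real (card B) * nf)"
      using SD C1 nf0 by (intro mult_left_mono mult_right_mono) auto
    finally have "real (card B) * (\<epsilon> * measure M (A L)) \<le> real (card B) * (C * D * nf)"
      by (simp add: ac_simps)
    thus ?thesis using cardpos by simp
  qed
  define b where "b = C * D / \<epsilon> * nf"
  have D0: "D \<ge> 0"
  proof -
    obtain K where K: "\<And>k. k \<ge> K \<Longrightarrow> real (card (int_ball G d k <#>\<^bsub>G\<^esub> int_ball G d k)) \<le> D * real (card (int_ball G d k))"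
      using assms(6) unfolding mult_doubling_def by blast
    have ne: "int_ball G d K \<noteq> {}" using one_ball[of K] by blast
    have cp: "card (int_ball G d K) > 0" by (rule card_gt_0_iff[THEN iffD2, OF conjI[OF ne assms(4)]])
    have "real (card (int_ball G d K <#>\<^bsub>G\<^esub> int_ball G d K)) \<le> D * real (card (int_ball G d K))" by (rule K) (rule order_refl)
    thus ?thesis using cp by (smt (verit) of_nat_0_le_iff of_nat_0_less_iff zero_le_mult_iff)
  qed
  have b0: "b \<ge> 0" unfolding b_def
    by (intro mult_nonneg_nonneg divide_nonneg_nonneg) (use C1 D0 nf0 eps in auto)
  have Ab: "measure M (A L) \<le> b" for L
  proof -
    have "measure M (A L) * \<epsilon> \<le> C * D * nf" using bound[of L] by (metis mult.commute)
    hence "measure M (A L) \<le> (C * D * nf) / \<epsilon>" by (rule pos_le_divide_eq[OF eps, THEN iffD2])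
    thus ?thesis by (simp only: b_def times_divide_eq_left)
  qed
  have X: "{x \<in> space M.
            (SUP k\<in>{1..}. ereal \<bar>(\<Sum>g\<in>int_ball G d k. hat_op G M T g f x)
                              / (\<Sum>g\<in>int_ball G d k. hat_op G M T g (\<lambda>_. 1) x)\<bar>) > ereal \<epsilon>}
        = (\<Union>L. A L)"
  proof (rule Set.set_eqI, rule HOL.iffI)
    fix x assume "x \<in> {x \<in> space M.
            (SUP k\<in>{1..}. ereal \<bar>(\<Sum>g\<in>int_ball G d k. hat_op G M T g f x)
                              / (\<Sum>g\<in>int_ball G d k. hat_op G M T g (\<lambda>_. 1) x)\<bar>) > ereal \<epsilon>}"
    then obtain k where "k \<ge> 1" "\<epsilon> < R k x" "x \<in> space M" by (auto simp: less_SUP_iff R_def)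
    thus "x \<in> (\<Union>L. A L)" unfolding A_def by (intro UN_I[of k]) auto
  next
    fix x assume "x \<in> (\<Union>L. A L)"
    then obtain k where "k \<ge> 1" "\<epsilon> < R k x" "x \<in> space M" unfolding A_def by auto
    thus "x \<in> {x \<in> space M.
            (SUP k\<in>{1..}. ereal \<bar>(\<Sum>g\<in>int_ball G d k. hat_op G M T g f x)
                              / (\<Sum>g\<in>int_ball G d k. hat_op G M T g (\<lambda>_. 1) x)\<bar>) > ereal \<epsilon>}"
      by (auto simp: less_SUP_iff R_def intro!: bexI[of _ k])
  qed

  have inc: "incseq A"
  proof (rule incseq_SucI)
    fix n show "A n \<subseteq> A (Suc n)" unfolding A_def by force
  qed
  have rA: "range A \<subseteq> sets M" using Am by blast
  have "emeasure M (\<Union>L. A L) = (SUP L. emeasure M (A L))"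
    by (rule SUP_emeasure_incseq[OF rA inc, symmetric])
  also have "\<dots> \<le> ennreal b"
  proof (rule SUP_least)
    fix L show "emeasure M (A L) \<le> ennreal b"
      unfolding emeasure_eq_measure using Ab[of L] by (rule ennreal_leI)
  qed
  finally have "ennreal (measure M (\<Union>L. A L)) \<le> ennreal b" by (simp only: emeasure_eq_measure)
  hence "measure M (\<Union>L. A L) \<le> b" using b0 by (simp only: ennreal_le_iff)
  thus ?thesis unfolding X b_def nf_def .
qed

end
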